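(* Let $K\ge2$ and $0<t_0<t_K$ be fixed and put $t_{K-1}:=t_0(t_K/t_0)^{(K-1)/K}$. Among all choices of points $t_0<t_1<\dots<t_{K-2}<t_{K-1}$ (with $t_{K-1}$ and $t_K$ as fixed above), the choice $t_k=t_0(t_K/t_0)^{k/K}$, $1\le k\le K-2$, minimizes $$C_{\mathrm{disc}}=\sum_{k=1}^{K-1}\max\{0,(t_{k+1}-t_k)-(t_k-t_{k-1})\}\frac{1}{t_k}+\frac{t_1-t_0}{t_0}.$$
   Context: The discretization $t_k=t_0(t_K/t_0)^{k/K}$, $0\le k\le K$, is called the log-SNR adapted discretization (it satisfies $t_{k+1}=e^{\Delta}t_k$ with $\Delta=\frac1K\log\frac{t_K}{t_0}$). *)

theory Defs
  imports Complex_Main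
begin

definition C_disc :: "nat \<Rightarrow> (nat \<Rightarrow> real) \<Rightarrow> real" where
  "C_disc K t =
     (\<Sum>k=1..K-1. max 0 ((t (k+1) - t k) - (t k - t (k-1))) * (1 / t k)) + (t 1 - t 0) / t 0"

definition geo_grid :: "real \<Rightarrow> real \<Rightarrow> nat \<Rightarrow> nat \<Rightarrow> real" where
  "geo_grid t0 tK K k = t0 * (tK / t0) powr (real k / real K)"

definition admissible :: "real \<Rightarrow> real \<Rightarrow> nat \<Rightarrow> (nat \<Rightarrow> real) \<Rightarrow> bool" where
  "admissible t0 tK K t \<longleftrightarrow>
     t 0 = t0 \<and> t K = tK \<and> t (K-1) = geo_grid t0 tK K (K-1) \<and>
     (\<forall>k. k < K - 1 \<longrightarrow> t k < t (Suc k))"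

end

theory Submission
  imports Defs
begin

lemma telesc:
  fixes t :: "nat \<Rightarrow> real"
  assumes "\<forall>k\<le>n. t k > 0"
  shows "(\<Sum>k=1..n. ((t (k+1) - t k) - (t k - t (k-1))) * (1 / t k)) + (t 1 - t 0) / t 0
       = (t (n+1) - t n) / t n + (\<Sum>k<n. t (k+1) / t k + t k / t (k+1) - 2)"
  using assms
proof (induction n)
  case 0
  then show ?case by simp
next
  case (Suc n)
  have p1: "t n > 0" "t (Suc n) > 0" using Suc.prems by auto
  have IH: "(\<Sum>k=1..n. ((t (k+1) - t k) - (t k - t (k-1))) * (1 / t k)) + (t 1 - t 0) / t 0
       = (t (n+1) - t n) / t n + (\<Sum>k<n. t (k+1) / t k + t k / t (k+1) - 2)"
    using Suc by auto
  have e: "(t (n+1) - t n) / t n + ((t (Suc n+1) - t (Suc n)) - (t (Suc n) - t n)) * (1 / t (Suc n))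
     = (t (Suc n+1) - t (Suc n)) / t (Suc n) + (t (n+1) / t n + t n / t (n+1) - 2)"
    using p1 by (simp add: field_simps)
  show ?case using IH e by (simp add: algebra_simps)
qed

lemma tangent:
  fixes x r :: real
  assumes "x > 0" "r > 0"
  shows "r + 1/r - 2 + (r - 1/r) * (ln x - ln r) \<le> x / 1 + 1 / x - 2"
proof -
  define y where "y = x / r"
  have y: "y > 0" using assms by (simp add: y_def)
  have lny: "ln y = ln x - ln r" using assms by (simp add: y_def ln_div)
  have a: "ln y \<le> y - 1" using y by (rule ln_le_minus_one)
  have b: "ln (1/y) \<le> 1/y - 1" using y by (intro ln_le_minus_one) simp
  have b': "- ln y \<le> 1/y - 1" using b y by (simp add: ln_div)
  have "r * ln y \<le> r * (y - 1)" using a assms by simp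
  moreover have "(1/r) * (- ln y) \<le> (1/r) * (1/y - 1)" using b' assms by (intro mult_left_mono) auto
  ultimately have "(r - 1/r) * ln y \<le> r * (y - 1) + (1/r) * (1/y - 1)"
    by (simp add: algebra_simps)
  also have "\<dots> = x + 1/x - r - 1/r" using assms by (simp add: y_def field_simps)
  finally show ?thesis using lny by simp
qed

theorem lemma5:
  fixes K :: nat and t0 tK :: real
  assumes "K \<ge> 2" and "0 < t0" and "t0 < tK"
  shows "admissible t0 tK K (geo_grid t0 tK K) \<and>
         (\<forall>t. admissible t0 tK K t \<longrightarrow> C_disc K (geo_grid t0 tK K) \<le> C_disc K t)"
proof -
  define r where "r = (tK / t0) powr (1 / real K)"
  define n where "n = K - 1"
  have Kn: "K = n + 1" "n \<ge> 1" using assms(1) by (auto simp: n_def)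
  have q: "tK / t0 > 1" using assms by simp
  have r1: "r > 1"
  proof -
    have "(tK / t0) powr 0 < (tK / t0) powr (1 / real K)"
      using q Kn by (intro powr_less_mono) auto
    then show ?thesis using q assms by (simp add: r_def)
  qed
  have r0: "r > 0" using r1 by simp
  have g: "geo_grid t0 tK K k = t0 * r ^ k" for k
  proof -
    have "r ^ k = (tK / t0) powr (real k * (1 / real K))"
      unfolding r_def using q by (subst powr_power) auto
    then show ?thesis by (simp add: geo_grid_def)
  qed
  have gK: "t0 * r ^ K = tK"
  proof -
    have "t0 * r ^ K = geo_grid t0 tK K K" by (simp add: g)
    also have "\<dots> = tK" using assms Kn by (simp add: geo_grid_def)
    finally show ?thesis .
  qed
  have adm: "admissible t0 tK K (geo_grid t0 tK K)"
    unfolding admissible_def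
  proof (intro conjI allI impI)
    show "geo_grid t0 tK K 0 = t0" by (simp add: g)
    show "geo_grid t0 tK K K = tK" using gK by (simp add: g)
    show "geo_grid t0 tK K (K - 1) = geo_grid t0 tK K (K - 1)" by simp
    fix k assume "k < K - 1"
    show "geo_grid t0 tK K k < geo_grid t0 tK K (Suc k)"
      using r1 assms(2) by (simp add: g)
  qed
  have Cg: "C_disc K (geo_grid t0 tK K) = (r - 1) + real n * (r + 1/r - 2)"
  proof -
    define t where "t = geo_grid t0 tK K"
    have tk: "t k = t0 * r ^ k" for k by (simp add: t_def g)
    have pos: "\<forall>k\<le>n. t k > 0" using r0 assms(2) by (simp add: tk)
    have "C_disc K t = (\<Sum>k=1..n. ((t (k+1) - t k) - (t k - t (k-1))) * (1 / t k)) + (t 1 - t 0) / t 0"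
      unfolding C_disc_def n_def
    proof (intro arg_cong2[where f="(+)"] refl sum.cong)
      fix k assume "k \<in> {1..K-1}"
      then obtain j where j: "k = Suc j" by (cases k) auto
      have "(t (k+1) - t k) - (t k - t (k-1)) = t0 * r ^ j * (r - 1)^2"
        by (simp add: j tk power2_eq_square algebra_simps)
      also have "\<dots> \<ge> 0" using assms(2) r0 by simp
      finally show "max 0 ((t (k+1) - t k) - (t k - t (k-1))) * (1 / t k)
          = ((t (k+1) - t k) - (t k - t (k-1))) * (1 / t k)" by simp
    qed
    also have "\<dots> = (t (n+1) - t n) / t n + (\<Sum>k<n. t (k+1) / t k + t k / t (k+1) - 2)"
      by (rule telesc[OF pos])
    also have "(\<Sum>k<n. t (k+1) / t k + t k / t (k+1) - 2) = (\<Sum>k<n. r + 1/r - 2)"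
      using r0 assms(2) by (intro sum.cong) (simp_all add: tk field_simps)
    also have "(t (n+1) - t n) / t n = r - 1"
      using r0 assms(2) by (simp add: tk field_simps)
    finally show ?thesis by (simp add: t_def)
  qed
  have "C_disc K (geo_grid t0 tK K) \<le> C_disc K t" if at: "admissible t0 tK K t" for t
  proof -
    have t0': "t 0 = t0" and tK': "t K = tK" and tn: "t n = t0 * r ^ n"
      and inc: "\<forall>k. k < n \<longrightarrow> t k < t (Suc k)"
      using at by (auto simp: admissible_def g n_def)
    have pos: "\<forall>k\<le>n. t k > 0"
    proof (intro allI impI)
      fix k show "k \<le> n \<Longrightarrow> t k > 0"
      proof (induction k)
        case 0 then show ?case using t0' assms(2) by simp
      next
        case (Suc k) then show ?case using inc[rule_format, of k] by simp
      qed
    qed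
    have "C_disc K t \<ge> (\<Sum>k=1..n. ((t (k+1) - t k) - (t k - t (k-1))) * (1 / t k)) + (t 1 - t 0) / t 0"
      unfolding C_disc_def n_def
    proof (intro add_right_mono sum_mono)
      fix k assume "k \<in> {1..K-1}"
      then have "t k > 0" using pos by (auto simp: n_def)
      then show "((t (k+1) - t k) - (t k - t (k-1))) * (1 / t k)
           \<le> max 0 ((t (k+1) - t k) - (t k - t (k-1))) * (1 / t k)"
        by (intro mult_right_mono) auto
    qed
    also have "(\<Sum>k=1..n. ((t (k+1) - t k) - (t k - t (k-1))) * (1 / t k)) + (t 1 - t 0) / t 0
       = (t (n+1) - t n) / t n + (\<Sum>k<n. t (k+1) / t k + t k / t (k+1) - 2)"
      by (rule telesc[OF pos])
    finally have c1: "C_disc K t \<ge> (t (n+1) - t n) / t n + (\<Sum>k<n. t (k+1) / t k + t k / t (k+1) - 2)" .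
    have l1: "(t (n+1) - t n) / t n = r - 1"
    proof -
      have "t (n+1) = t0 * r ^ (n+1)" using tK' gK Kn by simp
      then show ?thesis using tn r0 assms(2) by (simp add: field_simps)
    qed
    have l2: "(\<Sum>k<n. t (k+1) / t k + t k / t (k+1) - 2)
        \<ge> (\<Sum>k<n. r + 1/r - 2 + (r - 1/r) * ((ln (t (Suc k)) - ln (t k)) - ln r))"
    proof (intro sum_mono)
      fix k assume "k \<in> {..<n}"
      then have a: "t k > 0" "t (Suc k) > 0" using pos by auto
      have "ln (t (Suc k) / t k) = ln (t (Suc k)) - ln (t k)" using a by (simp add: ln_div)
      moreover have "r + 1/r - 2 + (r - 1/r) * (ln (t (Suc k) / t k) - ln r)
          \<le> (t (Suc k) / t k) / 1 + 1 / (t (Suc k) / t k) - 2"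
        using a r0 by (intro tangent) auto
      ultimately show "r + 1/r - 2 + (r - 1/r) * ((ln (t (Suc k)) - ln (t k)) - ln r)
          \<le> t (k+1) / t k + t k / t (k+1) - 2" by simp
    qed
    have l3: "(\<Sum>k<n. r + 1/r - 2 + (r - 1/r) * ((ln (t (Suc k)) - ln (t k)) - ln r))
       = real n * (r + 1/r - 2) + (r - 1/r) * ((\<Sum>k<n. ln (t (Suc k)) - ln (t k)) - real n * ln r)"
      by (simp add: sum.distrib sum_subtractf sum_distrib_left[symmetric])
    have l4: "(\<Sum>k<n. ln (t (Suc k)) - ln (t k)) = real n * ln r"
    proof -
      have "(\<Sum>k<n. ln (t (Suc k)) - ln (t k)) = ln (t n) - ln (t 0)"
        by (rule sum_lessThan_telescope)
      also have "\<dots> = real n * ln r" using tn t0' assms(2) r0 by (simp add: ln_mult ln_realpow)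
      finally show ?thesis .
    qed
    show ?thesis using c1 l1 l2 l3 l4 Cg by simp
  qed
  then show ?thesis using adm by blast
qed

end
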